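(* Let $\tilde L$ be a minimum-size counterexample. Then $\tilde L$ contains at most one doubly irreducible element.
   Context: For a poset $P$, $x$ upper covers $y$ (and $y$ lower covers $x$) if $y<x$ with nothing strictly between. Join-irreducible: upper covers exactly one element; meet-irreducible: lower covers exactly one element; doubly irreducible: both. For $x\in P$, ${\uparrow}x=\{y: x\le y\}$. A counterexample is a finite lattice $L$ with $|L|>1$ in which every join-irreducible $j$ satisfies $|{\uparrow}j|>|L|/2$; a minimum-size counterexample is a counterexample $\tilde L$ such that no counterexample has fewer elements. *)

theory Defs
  imports "HOL-Algebra.Lattice"
begin

definition upper_covers :: "('a, 'b) gorder_scheme \<Rightarrow> 'a \<Rightarrow> 'a \<Rightarrow> bool" where
  "upper_covers P x y \<longleftrightarrow> x \<in> carrier P \<and> y \<in> carrier P \<and>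
     y \<sqsubseteq>\<^bsub>P\<^esub> x \<and> y \<noteq> x \<and>
     \<not> (\<exists>z \<in> carrier P. y \<sqsubseteq>\<^bsub>P\<^esub> z \<and> y \<noteq> z \<and> z \<sqsubseteq>\<^bsub>P\<^esub> x \<and> z \<noteq> x)"

definition join_irreducible :: "('a, 'b) gorder_scheme \<Rightarrow> 'a \<Rightarrow> bool" where
  "join_irreducible P x \<longleftrightarrow> x \<in> carrier P \<and> (\<exists>!y. upper_covers P x y)"

definition meet_irreducible :: "('a, 'b) gorder_scheme \<Rightarrow> 'a \<Rightarrow> bool" where
  "meet_irreducible P x \<longleftrightarrow> x \<in> carrier P \<and> (\<exists>!y. upper_covers P y x)"

definition doubly_irreducible :: "('a, 'b) gorder_scheme \<Rightarrow> 'a \<Rightarrow> bool" where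
  "doubly_irreducible P x \<longleftrightarrow> join_irreducible P x \<and> meet_irreducible P x"

definition up_set :: "('a, 'b) gorder_scheme \<Rightarrow> 'a \<Rightarrow> 'a set" where
  "up_set P x = {y \<in> carrier P. x \<sqsubseteq>\<^bsub>P\<^esub> y}"

definition counterexample :: "('a, 'b) gorder_scheme \<Rightarrow> bool" where
  "counterexample L \<longleftrightarrow> lattice L \<and> finite (carrier L) \<and> card (carrier L) > 1 \<and>
     (\<forall>j. join_irreducible L j \<longrightarrow> 2 * card (up_set L j) > card (carrier L))"

text \<open>Minimality is over all lattices on the same element type; since any
  smaller lattice can be transported onto a subset of the carrier, this is
  equivalent to minimality over all finite lattices.\<close>
definition min_counterexample :: "'a gorder \<Rightarrow> bool" where
  "min_counterexample L \<longleftrightarrow> counterexample L \<and>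
     (\<forall>L' :: 'a gorder. counterexample L' \<longrightarrow> card (carrier L) \<le> card (carrier L'))"

end

theory Submission
  imports Defs
begin

lemma (in partial_order) lower_cover_exists:
  assumes fin: "finite (carrier L)" and x: "x \<in> carrier L" and a: "a \<in> carrier L"
    and xa: "x \<sqsubseteq> a" "x \<noteq> a"
  shows "\<exists>c. upper_covers L a c \<and> x \<sqsubseteq> c"
proof -
  define T where "T = {z \<in> carrier L. x \<sqsubseteq> z \<and> z \<sqsubseteq> a \<and> z \<noteq> a}"
  have "x \<in> T" using x xa unfolding T_def by auto
  then obtain z where z: "z \<in> T" and zmin: "\<And>w. w \<in> T \<Longrightarrow> card (up_set L z) \<le> card (up_set L w)"
    using ex_has_least_nat[of "\<lambda>z. z \<in> T" x "\<lambda>z. card (up_set L z)"] by blast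
  have "upper_covers L a z"
    unfolding upper_covers_def
  proof (intro conjI)
    show "\<not> (\<exists>w\<in>carrier L. z \<sqsubseteq> w \<and> z \<noteq> w \<and> w \<sqsubseteq> a \<and> w \<noteq> a)"
    proof
      assume "\<exists>w\<in>carrier L. z \<sqsubseteq> w \<and> z \<noteq> w \<and> w \<sqsubseteq> a \<and> w \<noteq> a"
      then obtain w where w: "w \<in> carrier L" "z \<sqsubseteq> w" "z \<noteq> w" "w \<sqsubseteq> a" "w \<noteq> a" by blast
      have zc: "z \<in> carrier L" "x \<sqsubseteq> z" using z unfolding T_def by auto
      have "w \<in> T" using w zc x unfolding T_def by (auto intro: le_trans)
      have "up_set L w \<subset> up_set L z"
      proof
        show "up_set L w \<subseteq> up_set L z" using w zc unfolding up_set_def by (auto intro: le_trans)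
        show "up_set L w \<noteq> up_set L z"
        proof
          assume "up_set L w = up_set L z"
          then have "z \<in> up_set L w" using zc unfolding up_set_def by auto
          then have "w \<sqsubseteq> z" unfolding up_set_def by auto
          then show False using w zc le_antisym by auto
        qed
      qed
      moreover have "finite (up_set L z)" using fin unfolding up_set_def by auto
      ultimately have "card (up_set L w) < card (up_set L z)" by (rule psubset_card_mono[rotated])
      with zmin[OF \<open>w \<in> T\<close>] show False by simp
    qed
  qed (use z a in \<open>auto simp: T_def\<close>)
  then show ?thesis using z unfolding T_def by auto
qed

lemma (in partial_order) upper_cover_exists:
  assumes fin: "finite (carrier L)" and y: "y \<in> carrier L" and a: "a \<in> carrier L"
    and ay: "a \<sqsubseteq> y" "a \<noteq> y"
  shows "\<exists>u. upper_covers L u a \<and> u \<sqsubseteq> y"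
proof -
  define dn where "dn z = {w \<in> carrier L. w \<sqsubseteq> z}" for z
  define T where "T = {z \<in> carrier L. a \<sqsubseteq> z \<and> z \<noteq> a \<and> z \<sqsubseteq> y}"
  have "y \<in> T" using y ay unfolding T_def by auto
  then obtain z where z: "z \<in> T" and zmin: "\<And>w. w \<in> T \<Longrightarrow> card (dn z) \<le> card (dn w)"
    using ex_has_least_nat[of "\<lambda>z. z \<in> T" y "\<lambda>z. card (dn z)"] by blast
  have "upper_covers L z a"
    unfolding upper_covers_def
  proof (intro conjI)
    show "\<not> (\<exists>w\<in>carrier L. a \<sqsubseteq> w \<and> a \<noteq> w \<and> w \<sqsubseteq> z \<and> w \<noteq> z)"
    proof
      assume "\<exists>w\<in>carrier L. a \<sqsubseteq> w \<and> a \<noteq> w \<and> w \<sqsubseteq> z \<and> w \<noteq> z"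
      then obtain w where w: "w \<in> carrier L" "a \<sqsubseteq> w" "a \<noteq> w" "w \<sqsubseteq> z" "w \<noteq> z" by blast
      have zc: "z \<in> carrier L" "z \<sqsubseteq> y" using z unfolding T_def by auto
      have "w \<in> T" using w zc y unfolding T_def by (auto intro: le_trans)
      have "dn w \<subset> dn z"
      proof
        show "dn w \<subseteq> dn z" using w zc unfolding dn_def by (auto intro: le_trans)
        show "dn w \<noteq> dn z"
        proof
          assume "dn w = dn z"
          then have "z \<in> dn w" using zc unfolding dn_def by auto
          then have "z \<sqsubseteq> w" unfolding dn_def by auto
          then show False using w zc le_antisym by auto
        qed
      qed
      moreover have "finite (dn z)" using fin unfolding dn_def by auto
      ultimately have "card (dn w) < card (dn z)" by (rule psubset_card_mono[rotated])
      with zmin[OF \<open>w \<in> T\<close>] show False by simp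
    qed
  qed (use z a in \<open>auto simp: T_def\<close>)
  then show ?thesis using z unfolding T_def by auto
qed


lemma (in lattice) join_not_ji:
  assumes fin: "finite (carrier L)" and x: "x \<in> carrier L" and y: "y \<in> carrier L"
    and ji: "join_irreducible L (x \<squnion> y)" and nx: "x \<noteq> x \<squnion> y" and ny: "y \<noteq> x \<squnion> y"
  shows False
proof -
  let ?s = "x \<squnion> y"
  have s: "?s \<in> carrier L" using x y by simp
  obtain c where c: "upper_covers L ?s c" and cu: "\<And>d. upper_covers L ?s d \<Longrightarrow> d = c"
    using ji unfolding join_irreducible_def by blast
  obtain c1 where c1: "upper_covers L ?s c1" "x \<sqsubseteq> c1"
    using lower_cover_exists[OF fin x s join_left[OF x y] nx] by blast
  obtain c2 where c2: "upper_covers L ?s c2" "y \<sqsubseteq> c2"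
    using lower_cover_exists[OF fin y s join_right[OF x y] ny] by blast
  have cc: "c \<in> carrier L" "c \<sqsubseteq> ?s" "c \<noteq> ?s" using c unfolding upper_covers_def by auto
  have "?s \<sqsubseteq> c" using c1 c2 cu[OF c1(1)] cu[OF c2(1)] x y cc by (intro join_le) auto
  then show False using cc le_antisym s by auto
qed

lemma (in lattice) meet_not_mi:
  assumes fin: "finite (carrier L)" and x: "x \<in> carrier L" and y: "y \<in> carrier L"
    and mi: "meet_irreducible L (x \<sqinter> y)" and nx: "x \<noteq> x \<sqinter> y" and ny: "y \<noteq> x \<sqinter> y"
  shows False
proof -
  let ?s = "x \<sqinter> y"
  have s: "?s \<in> carrier L" using x y by simp
  obtain c where c: "upper_covers L c ?s" and cu: "\<And>d. upper_covers L d ?s \<Longrightarrow> d = c"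
    using mi unfolding meet_irreducible_def by blast
  obtain c1 where c1: "upper_covers L c1 ?s" "c1 \<sqsubseteq> x"
    using upper_cover_exists[OF fin x s meet_left[OF x y] nx[symmetric]] by blast
  obtain c2 where c2: "upper_covers L c2 ?s" "c2 \<sqsubseteq> y"
    using upper_cover_exists[OF fin y s meet_right[OF x y] ny[symmetric]] by blast
  have cc: "c \<in> carrier L" "?s \<sqsubseteq> c" "c \<noteq> ?s" using c unfolding upper_covers_def by auto
  have "c \<sqsubseteq> ?s" using c1 c2 cu[OF c1(1)] cu[OF c2(1)] x y cc by (intro meet_le) auto
  then show False using cc le_antisym s by auto
qed

lemma (in lattice) least_sub:
  assumes xy': "x \<in> carrier L" "y \<in> carrier L" "x \<notin> S" "y \<notin> S" and nS: "x \<squnion> y \<notin> S"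
  shows "least (L\<lparr>carrier := carrier L - S\<rparr>) (x \<squnion> y) (Upper (L\<lparr>carrier := carrier L - S\<rparr>) {x, y})"
  unfolding least_def Upper_def
  apply (intro conjI ballI)
    apply (simp add: xy')
   apply (simp add: xy' nS join_left join_right)
  apply (clarsimp simp: xy')
  apply (rule join_le)
      apply (simp_all add: xy')
  done

lemma (in lattice) greatest_sub:
  assumes xy': "x \<in> carrier L" "y \<in> carrier L" "x \<notin> S" "y \<notin> S" and nS: "x \<sqinter> y \<notin> S"
  shows "greatest (L\<lparr>carrier := carrier L - S\<rparr>) (x \<sqinter> y) (Lower (L\<lparr>carrier := carrier L - S\<rparr>) {x, y})"
  unfolding greatest_def Lower_def
  apply (intro conjI ballI)
    apply (simp add: xy')
   apply (simp add: xy' nS meet_left meet_right)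
  apply (clarsimp simp: xy')
  apply (rule meet_le)
      apply (simp_all add: xy')
  done

lemma (in lattice) remove_di_lattice:
  assumes fin: "finite (carrier L)"
    and S: "\<And>s. s \<in> S \<Longrightarrow> doubly_irreducible L s"
  shows "lattice (L\<lparr>carrier := carrier L - S\<rparr>)"
proof -
  have P: "partial_order (L\<lparr>carrier := carrier L - S\<rparr>)"
    apply unfold_locales apply (simp_all add: eq_is_equal) apply (elim conjE, rule le_antisym; assumption) apply (elim conjE, rule le_trans; assumption) done
  have U: "upper_semilattice (L\<lparr>carrier := carrier L - S\<rparr>)"
    unfolding upper_semilattice_def upper_semilattice_axioms_def
  proof (intro conjI P allI impI)
    fix x y assume xy: "x \<in> carrier (L\<lparr>carrier := carrier L - S\<rparr>)" "y \<in> carrier (L\<lparr>carrier := carrier L - S\<rparr>)"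
    then have xy': "x \<in> carrier L" "y \<in> carrier L" "x \<notin> S" "y \<notin> S" by simp_all
    have nS: "x \<squnion> y \<notin> S"
    proof
      assume "x \<squnion> y \<in> S"
      have d: "join_irreducible L (x \<squnion> y)" using S[OF \<open>x \<squnion> y \<in> S\<close>] unfolding doubly_irreducible_def by (rule conjE)
      have n1: "x \<noteq> x \<squnion> y" using xy'(3) \<open>x \<squnion> y \<in> S\<close> by metis
      have n2: "y \<noteq> x \<squnion> y" using xy'(4) \<open>x \<squnion> y \<in> S\<close> by metis
      show False by (rule join_not_ji[OF fin xy'(1,2) d n1 n2])
    qed
    show "\<exists>s. least (L\<lparr>carrier := carrier L - S\<rparr>) s (Upper (L\<lparr>carrier := carrier L - S\<rparr>) {x, y})"
      using least_sub[OF xy' nS] by (rule exI)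
  qed
  have M: "lower_semilattice (L\<lparr>carrier := carrier L - S\<rparr>)"
    unfolding lower_semilattice_def lower_semilattice_axioms_def
  proof (intro conjI P allI impI)
    fix x y assume xy: "x \<in> carrier (L\<lparr>carrier := carrier L - S\<rparr>)" "y \<in> carrier (L\<lparr>carrier := carrier L - S\<rparr>)"
    then have xy': "x \<in> carrier L" "y \<in> carrier L" "x \<notin> S" "y \<notin> S" by simp_all
    have nS: "x \<sqinter> y \<notin> S"
    proof
      assume "x \<sqinter> y \<in> S"
      have d: "meet_irreducible L (x \<sqinter> y)" using S[OF \<open>x \<sqinter> y \<in> S\<close>] unfolding doubly_irreducible_def by (rule conjE)
      have n1: "x \<noteq> x \<sqinter> y" using xy'(3) \<open>x \<sqinter> y \<in> S\<close> by metis
      have n2: "y \<noteq> x \<sqinter> y" using xy'(4) \<open>x \<sqinter> y \<in> S\<close> by metis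
      show False by (rule meet_not_mi[OF fin xy'(1,2) d n1 n2])
    qed
    show "\<exists>s. greatest (L\<lparr>carrier := carrier L - S\<rparr>) s (Lower (L\<lparr>carrier := carrier L - S\<rparr>) {x, y})"
      using greatest_sub[OF xy' nS] by (rule exI)
  qed
  show ?thesis using U M by (simp add: lattice_def)
qed


lemma (in partial_order) ji_sub:
  assumes fin: "finite (carrier L)" and j: "j \<in> carrier L" "j \<notin> S"
    and ji: "join_irreducible (L\<lparr>carrier := carrier L - S\<rparr>) j"
  shows "join_irreducible L j \<or> (\<exists>a\<in>S. upper_covers L j a)"
proof (rule disjCI)
  assume na: "\<not> (\<exists>a\<in>S. upper_covers L j a)"
  obtain c where c: "upper_covers (L\<lparr>carrier := carrier L - S\<rparr>) j c"
    and cu: "\<And>d. upper_covers (L\<lparr>carrier := carrier L - S\<rparr>) j d \<Longrightarrow> d = c"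
    using ji unfolding join_irreducible_def by blast
  have cc: "c \<in> carrier L" "c \<sqsubseteq> j" "c \<noteq> j" using c unfolding upper_covers_def by auto
  have tr: "upper_covers (L\<lparr>carrier := carrier L - S\<rparr>) j d" if "upper_covers L j d" for d
  proof -
    have "d \<notin> S" using na that by blast
    then show ?thesis using that j unfolding upper_covers_def by auto
  qed
  obtain d where d: "upper_covers L j d" "c \<sqsubseteq> d"
    using lower_cover_exists[OF fin cc(1) j(1) cc(2,3)] by blast
  show "join_irreducible L j"
    unfolding join_irreducible_def
  proof (intro conjI j(1) ex1I)
    show "upper_covers L j d" by (rule d(1))
    fix e assume "upper_covers L j e"
    then show "e = d" using cu[OF tr] d(1) by metis
  qed
qed

lemma (in partial_order) up_cover_below:
  assumes fin: "finite (carrier L)" and mi: "meet_irreducible L a" and ja: "upper_covers L j a"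
    and y: "y \<in> carrier L" "a \<sqsubseteq> y" "a \<noteq> y"
  shows "j \<sqsubseteq> y"
proof -
  have a: "a \<in> carrier L" using ja unfolding upper_covers_def by auto
  obtain u where u: "upper_covers L u a" "u \<sqsubseteq> y" using upper_cover_exists[OF fin y(1) a y(2,3)] by blast
  have "u = j" using mi u(1) ja unfolding meet_irreducible_def by blast
  then show ?thesis using u by simp
qed

lemma (in partial_order) card_below:
  assumes fin: "finite (carrier L)" and a: "a \<in> carrier L" and j: "j \<in> carrier L" "j \<notin> S"
    and ja: "j \<sqsubseteq> a" "j \<noteq> a" and aS: "S \<inter> up_set L a \<subseteq> {a}"
  shows "card (up_set L a) \<le> card (up_set L j - S)"
proof -
  have sub: "insert j (up_set L a - {a}) \<subseteq> up_set L j - S"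
    using j ja aS a unfolding up_set_def by (auto intro: le_trans)
  have ja': "j \<notin> up_set L a - {a}" using ja a j le_antisym unfolding up_set_def by auto
  have fa: "finite (up_set L a)" using fin unfolding up_set_def by auto
  have aa: "a \<in> up_set L a" using a unfolding up_set_def by auto
  have "card (up_set L a) = card (insert j (up_set L a - {a}))"
    using ja' fa aa by (simp add: card_Diff_singleton) (metis Suc_pred card_gt_0_iff empty_iff)
  also have "\<dots> \<le> card (up_set L j - S)"
    by (rule card_mono[OF _ sub]) (use fin in \<open>auto simp: up_set_def\<close>)
  finally show ?thesis .
qed


lemma (in lattice) reduce:
  assumes ce: "counterexample L" and S: "\<And>s. s \<in> S \<Longrightarrow> doubly_irreducible L s"
    and sz: "card (carrier L - S) > 1"
    and b1: "\<And>j. join_irreducible L j \<Longrightarrow> j \<notin> S \<Longrightarrow> card (carrier L - S) < 2 * card (up_set L j - S)"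
    and b2: "\<And>j a. a \<in> S \<Longrightarrow> upper_covers L j a \<Longrightarrow> j \<notin> S \<Longrightarrow> card (carrier L - S) < 2 * card (up_set L j - S)"
  shows "counterexample (L\<lparr>carrier := carrier L - S\<rparr>)"
proof -
  have fin: "finite (carrier L)" using ce unfolding counterexample_def by auto
  show ?thesis
    unfolding counterexample_def
  proof (intro conjI allI impI)
    show "lattice (L\<lparr>carrier := carrier L - S\<rparr>)" by (rule remove_di_lattice[OF fin S])
    show "finite (carrier (L\<lparr>carrier := carrier L - S\<rparr>))" using fin by simp
    show "1 < card (carrier (L\<lparr>carrier := carrier L - S\<rparr>))" using sz by simp
    fix j assume ji: "join_irreducible (L\<lparr>carrier := carrier L - S\<rparr>) j"
    then have j: "j \<in> carrier L" "j \<notin> S" unfolding join_irreducible_def by auto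
    have up: "up_set (L\<lparr>carrier := carrier L - S\<rparr>) j = up_set L j - S" unfolding up_set_def by auto
    from ji_sub[OF fin j ji]
    show "card (carrier (L\<lparr>carrier := carrier L - S\<rparr>)) < 2 * card (up_set (L\<lparr>carrier := carrier L - S\<rparr>) j)"
      unfolding up using b1 b2 j by auto
  qed
qed


lemma (in lattice) case_comp:
  assumes ce: "counterexample L" and da: "doubly_irreducible L a" and db: "doubly_irreducible L b"
    and ab: "a \<sqsubseteq> b" "a \<noteq> b"
  shows "counterexample (L\<lparr>carrier := carrier L - {a}\<rparr>)"
proof -
  have fin: "finite (carrier L)" using ce unfolding counterexample_def by auto
  have JB: "\<And>j. join_irreducible L j \<Longrightarrow> card (carrier L) < 2 * card (up_set L j)"
    using ce unfolding counterexample_def by auto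
  have a: "a \<in> carrier L" and b: "b \<in> carrier L"
    using da db unfolding doubly_irreducible_def join_irreducible_def by auto
  have cardC: "card (carrier L - {a}) = card (carrier L) - 1" using a fin by simp
  have fup: "\<And>x. finite (up_set L x)" using fin unfolding up_set_def by auto
  show ?thesis
  proof (rule reduce[OF ce])
    show "\<And>s. s \<in> {a} \<Longrightarrow> doubly_irreducible L s" using da by simp
    obtain c where c: "upper_covers L a c"
      using da unfolding doubly_irreducible_def join_irreducible_def by blast
    have cc: "c \<in> carrier L" "c \<sqsubseteq> a" "c \<noteq> a" using c unfolding upper_covers_def by auto
    have "c \<noteq> b" using cc ab a b le_antisym by blast
    then have "card {b, c} = 2" by simp
    moreover have "{b, c} \<subseteq> carrier L - {a}" using cc ab b by auto
    ultimately have "2 \<le> card (carrier L - {a})" using card_mono[of "carrier L - {a}" "{b,c}"] fin by simp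
    then show "1 < card (carrier L - {a})" by simp
  next
    fix j assume ji: "join_irreducible L j" and jS: "j \<notin> {a}"
    have j: "j \<in> carrier L" using ji unfolding join_irreducible_def by auto
    show "card (carrier L - {a}) < 2 * card (up_set L j - {a})"
    proof (cases "j \<sqsubseteq> a")
      case True
      have "card (up_set L a) \<le> card (up_set L j - {a})"
        by (rule card_below[OF fin a j]) (use jS True in auto)
      moreover have "card (carrier L) < 2 * card (up_set L a)" using JB da unfolding doubly_irreducible_def by auto
      ultimately show ?thesis unfolding cardC by linarith
    next
      case False
      then have "up_set L j - {a} = up_set L j" unfolding up_set_def by auto
      then show ?thesis unfolding cardC using JB[OF ji] by simp
    qed
  next
    fix j a' assume a': "a' \<in> {a}" and ja: "upper_covers L j a'" and jS: "j \<notin> {a}"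
    have mi: "meet_irreducible L a" using da unfolding doubly_irreducible_def by auto
    have jb: "j \<sqsubseteq> b" using up_cover_below[OF fin mi _ b ab] ja a' by simp
    have j: "j \<in> carrier L" using ja unfolding upper_covers_def by auto
    have "up_set L b \<subseteq> up_set L j - {a}"
      using jb j b ab a le_antisym unfolding up_set_def by (auto intro: le_trans)
    then have "card (up_set L b) \<le> card (up_set L j - {a})" by (rule card_mono[rotated]) (use fup in auto)
    moreover have "card (carrier L) < 2 * card (up_set L b)" using JB db unfolding doubly_irreducible_def by auto
    ultimately show "card (carrier L - {a}) < 2 * card (up_set L j - {a})" unfolding cardC by linarith
  qed
qed

lemma (in lattice) b2_incomp:
  assumes fin: "finite (carrier L)" and bx: "card (carrier L) < 2 * card (up_set L x)"
    and mi: "meet_irreducible L x" and jx: "upper_covers L j x"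
    and y: "y \<in> carrier L" and xy: "\<not> x \<sqsubseteq> y" and n2: "1 < card (carrier L)"
  shows "card (carrier L) - 2 < 2 * card (up_set L j - {x, y})"
proof -
  have x: "x \<in> carrier L" and j: "j \<in> carrier L" and xj: "x \<sqsubseteq> j" "x \<noteq> j"
    using jx unfolding upper_covers_def by auto
  have fup: "\<And>x. finite (up_set L x)" using fin unfolding up_set_def by auto
  have "up_set L x - {x} \<subseteq> up_set L j - {x, y}"
  proof
    fix z assume z: "z \<in> up_set L x - {x}"
    then have zc: "z \<in> carrier L" "x \<sqsubseteq> z" "z \<noteq> x" unfolding up_set_def by auto
    have "j \<sqsubseteq> z" using up_cover_below[OF fin mi jx zc(1,2)] zc(3) by metis
    moreover have "z \<noteq> y" using zc xy by metis
    ultimately show "z \<in> up_set L j - {x, y}" using zc unfolding up_set_def by auto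
  qed
  then have "card (up_set L x - {x}) \<le> card (up_set L j - {x, y})" by (rule card_mono[rotated]) (use fup in auto)
  moreover have "card (up_set L x - {x}) = card (up_set L x) - 1"
    using x by (simp add: up_set_def)
  ultimately show ?thesis using bx n2 by arith
qed


lemma (in lattice) case_incomp:
  assumes ce: "counterexample L" and da: "doubly_irreducible L a" and db: "doubly_irreducible L b"
    and ab: "\<not> a \<sqsubseteq> b" "\<not> b \<sqsubseteq> a"
  shows "counterexample (L\<lparr>carrier := carrier L - {a, b}\<rparr>)"
proof -
  have fin: "finite (carrier L)" using ce unfolding counterexample_def by auto
  have n2: "1 < card (carrier L)" using ce unfolding counterexample_def by auto
  have JB: "\<And>j. join_irreducible L j \<Longrightarrow> card (carrier L) < 2 * card (up_set L j)"
    using ce unfolding counterexample_def by auto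
  have a: "a \<in> carrier L" and b: "b \<in> carrier L"
    using da db unfolding doubly_irreducible_def join_irreducible_def by auto
  have neq: "a \<noteq> b" using ab a by auto
  have cardC: "card (carrier L - {a, b}) = card (carrier L) - 2"
    using a b fin neq by (simp add: card_Diff_subset)
  show ?thesis
  proof (rule reduce[OF ce])
    show "\<And>s. s \<in> {a, b} \<Longrightarrow> doubly_irreducible L s" using da db by auto
    have j1: "a \<squnion> b \<in> carrier L" "a \<sqinter> b \<in> carrier L" using a b by auto
    have al: "a \<sqsubseteq> a \<squnion> b" "b \<sqsubseteq> a \<squnion> b" using a b join_left join_right by auto
    have ml: "a \<sqinter> b \<sqsubseteq> a" "a \<sqinter> b \<sqsubseteq> b" using a b meet_left meet_right by auto
    have d1: "a \<squnion> b \<noteq> a" using al ab by metis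
    have d2: "a \<squnion> b \<noteq> b" using al ab by metis
    have d3: "a \<sqinter> b \<noteq> a" using ml ab by metis
    have d4: "a \<sqinter> b \<noteq> b" using ml ab by metis
    have d5: "a \<squnion> b \<noteq> a \<sqinter> b"
    proof
      assume h: "a \<squnion> b = a \<sqinter> b"
      have "a \<sqsubseteq> a \<sqinter> b" using al(1) h by simp
      then have "a \<sqsubseteq> b" using ml(2) a b j1 le_trans by blast
      then show False using ab by simp
    qed
    have "card {a \<squnion> b, a \<sqinter> b} = 2" using d5 by simp
    moreover have "{a \<squnion> b, a \<sqinter> b} \<subseteq> carrier L - {a, b}" using j1 d1 d2 d3 d4 by auto
    ultimately have "2 \<le> card (carrier L - {a, b})"
      using card_mono[of "carrier L - {a, b}" "{a \<squnion> b, a \<sqinter> b}"] fin by simp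
    then show "1 < card (carrier L - {a, b})" by simp
  next
    fix j assume ji: "join_irreducible L j" and jS: "j \<notin> {a, b}"
    have j: "j \<in> carrier L" using ji unfolding join_irreducible_def by auto
    show "card (carrier L - {a, b}) < 2 * card (up_set L j - {a, b})"
    proof (cases "j \<sqsubseteq> a")
      case True
      have "card (up_set L a) \<le> card (up_set L j - {a, b})"
        by (rule card_below[OF fin a j]) (use jS True ab in \<open>auto simp: up_set_def\<close>)
      moreover have "card (carrier L) < 2 * card (up_set L a)" using JB da unfolding doubly_irreducible_def by auto
      ultimately show ?thesis unfolding cardC by linarith
    next
      case nja: False
      show ?thesis
      proof (cases "j \<sqsubseteq> b")
        case True
        have "card (up_set L b) \<le> card (up_set L j - {a, b})"
          by (rule card_below[OF fin b j]) (use jS True ab in \<open>auto simp: up_set_def\<close>)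
        moreover have "card (carrier L) < 2 * card (up_set L b)" using JB db unfolding doubly_irreducible_def by auto
        ultimately show ?thesis unfolding cardC by linarith
      next
        case False
        then have "up_set L j - {a, b} = up_set L j" using nja unfolding up_set_def by auto
        then show ?thesis unfolding cardC using JB[OF ji] by simp
      qed
    qed
  next
    fix j a' assume a': "a' \<in> {a, b}" and ja: "upper_covers L j a'" and jS: "j \<notin> {a, b}"
    show "card (carrier L - {a, b}) < 2 * card (up_set L j - {a, b})"
    proof (cases "a' = a")
      case True
      have "card (carrier L) - 2 < 2 * card (up_set L j - {a, b})"
        by (rule b2_incomp[OF fin _ _ _ b ab(1) n2])
          (use JB da ja True in \<open>auto simp: doubly_irreducible_def\<close>)
      then show ?thesis unfolding cardC .
    next
      case False
      then have "a' = b" using a' by simp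
      have "card (carrier L) - 2 < 2 * card (up_set L j - {b, a})"
        by (rule b2_incomp[OF fin _ _ _ a ab(2) n2])
          (use JB db ja \<open>a' = b\<close> in \<open>auto simp: doubly_irreducible_def\<close>)
      then show ?thesis unfolding cardC by (simp add: insert_commute)
    qed
  qed
qed


theorem theorem2p6:
  fixes L :: "'a gorder"
  assumes "min_counterexample L"
  shows "card {x \<in> carrier L. doubly_irreducible L x} \<le> 1"
proof (rule ccontr)
  assume nc: "\<not> card {x \<in> carrier L. doubly_irreducible L x} \<le> 1"
  have ce: "counterexample L" and mn: "\<And>L' :: 'a gorder. counterexample L' \<Longrightarrow> card (carrier L) \<le> card (carrier L')"
    using assms unfolding min_counterexample_def by auto
  interpret lattice L using ce unfolding counterexample_def by auto
  have fin: "finite (carrier L)" using ce unfolding counterexample_def by auto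
  have "finite {x \<in> carrier L. doubly_irreducible L x}" using fin by simp
  then obtain a b where a: "a \<in> carrier L" "doubly_irreducible L a" and b: "b \<in> carrier L" "doubly_irreducible L b"
    and neq: "a \<noteq> b"
    using nc card_le_Suc0_iff_eq[of "{x \<in> carrier L. doubly_irreducible L x}"] by auto
  have sm1: "\<And>x. x \<in> carrier L \<Longrightarrow> card (carrier L - {x}) < card (carrier L)"
    using fin by (rule card_Diff1_less)
  show False
  proof (cases "a \<sqsubseteq>\<^bsub>L\<^esub> b")
    case True
    have "counterexample (L\<lparr>carrier := carrier L - {a}\<rparr>)" by (rule case_comp[OF ce a(2) b(2) True neq])
    from mn[OF this] sm1[OF a(1)] show False by simp
  next
    case nab: False
    show False
    proof (cases "b \<sqsubseteq>\<^bsub>L\<^esub> a")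
      case True
      have "counterexample (L\<lparr>carrier := carrier L - {b}\<rparr>)" by (rule case_comp[OF ce b(2) a(2) True neq[symmetric]])
      from mn[OF this] sm1[OF b(1)] show False by simp
    next
      case False
      have "counterexample (L\<lparr>carrier := carrier L - {a, b}\<rparr>)" by (rule case_incomp[OF ce a(2) b(2) nab False])
      moreover have "card (carrier L - {a, b}) < card (carrier L)"
        using fin a b by (intro psubset_card_mono) auto
      ultimately show False using mn by fastforce
    qed
  qed
qed

end
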